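(* Let $X$ be a finite alphabet, $L\subseteq X^*$ a regular language and $L^{\mathrm{rev}}$ its reversal. (a) The algebra $(Q,\delta_a,i)$ underlying the minimal deterministic automaton of $L$ (forgetting final states) is isomorphic to the dual $F$-algebra of the smallest subcoalgebra of $\mathsf{Reg}(X)$ containing $L^{\mathrm{rev}}$ (i.e. the smallest boolean subalgebra of $\mathsf{Reg}(X)$ containing $L^{\mathrm{rev}}$ and closed under all left derivatives $a^{-1}(-)$, with the restricted structure). (b) The $F$-algebra associated to the syntactic monoid $e_L:X^*\twoheadrightarrow\mathrm{Syn}(L)$ (states $\mathrm{Syn}(L)$, initial state the unit, transitions $m\mapsto m\cdot e_L(a)$) is isomorphic to the dual $F$-algebra of the smallest local variety of languages containing $L^{\mathrm{rev}}$.
   Context: $F$ is the endofunctor $FQ=1+X\times Q$ on $\mathbf{Set}$; an $F$-algebra is a triple $(Q,(\delta_a)_{a\in X},i)$ with maps $\delta_a:Q\to Q$ and an initial state $i\in Q$. $\overline{T}$ is the endofunctor $\overline{T}B=\{0,1\}\times B^X$ on boolean algebras; a $\overline{T}$-coalgebra is $(B,(\gamma_a)_{a\in X},f)$ with boolean homomorphisms $\gamma_a:B\to B$ and $f:B\to\{0,1\}$. The dual $F$-algebra of a finite $\overline{T}$-coalgebra $(B,\gamma_a,f)$ has as states the atoms of $B$, initial state the unique atom $z$ with $f(z)=1$, and a transition $z\xrightarrow{a}z'$ iff $z'$ is the unique atom with $\gamma_a(z')\geq z$ (this is a restriction of Stone duality, giving a dual equivalence between finite $\overline{T}$-coalgebras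 and finite $F$-algebras). $\mathsf{Reg}(X)$ is the boolean algebra of regular languages over $X$ made into a $\overline{T}$-coalgebra by $f(K)=1$ iff $\varepsilon\in K$ and $\gamma_a(K)=a^{-1}K=\{w: aw\in K\}$. A subcoalgebra of $\mathsf{Reg}(X)$ is a boolean subalgebra closed under all $a^{-1}(-)$. A local variety of languages is a subcoalgebra closed moreover under right derivatives $Ka^{-1}=\{w: wa\in K\}$. $L^{\mathrm{rev}}=\{a_n\cdots a_1: a_1\cdots a_n\in L\}$. The syntactic monoid of $L$ is $X^*/\!\sim$ with $u\sim v$ iff for all $x,y\in X^*$: $xuy\in L\Leftrightarrow xvy\in L$, and $e_L$ is the quotient map. *)

theory Defs
  imports Main
begin

definition regular :: "'a list set \<Rightarrow> bool" where
  "regular L \<longleftrightarrow> (\<exists>(Q::nat set) d q0 Fin. finite Q \<and> q0 \<in> Q \<and> Fin \<subseteq> Q \<and>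
     (\<forall>a q. q \<in> Q \<longrightarrow> d a q \<in> Q) \<and> L = {w. fold d w q0 \<in> Fin})"

definition Reg :: "'a list set set" where
  "Reg = {K. regular K}"

definition lderiv :: "'a \<Rightarrow> 'a list set \<Rightarrow> 'a list set" where
  "lderiv a K = {w. a # w \<in> K}"

definition rderiv :: "'a \<Rightarrow> 'a list set \<Rightarrow> 'a list set" where
  "rderiv a K = {w. w @ [a] \<in> K}"

definition lang_rev :: "'a list set \<Rightarrow> 'a list set" where
  "lang_rev L = rev ` L"

definition bool_subalg :: "'a list set set \<Rightarrow> bool" where
  "bool_subalg B \<longleftrightarrow> B \<subseteq> Reg \<and> {} \<in> B \<and> UNIV \<in> B \<and>
     (\<forall>K\<in>B. \<forall>K'\<in>B. K \<union> K' \<in> B \<and> K \<inter> K' \<in> B) \<and> (\<forall>K\<in>B. - K \<in> B)"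

definition subcoalg :: "'a list set set \<Rightarrow> bool" where
  "subcoalg B \<longleftrightarrow> bool_subalg B \<and> (\<forall>a. \<forall>K\<in>B. lderiv a K \<in> B)"

definition local_variety :: "'a list set set \<Rightarrow> bool" where
  "local_variety B \<longleftrightarrow> subcoalg B \<and> (\<forall>a. \<forall>K\<in>B. rderiv a K \<in> B)"

definition subcoalg_gen :: "'a list set \<Rightarrow> 'a list set set" where
  "subcoalg_gen K = \<Inter> {B. subcoalg B \<and> K \<in> B}"

definition local_variety_gen :: "'a list set \<Rightarrow> 'a list set set" where
  "local_variety_gen K = \<Inter> {B. local_variety B \<and> K \<in> B}"

text \<open>The dual F-algebra of a finite subcoalgebra B (a boolean algebra of sets):
  states are atoms, initial state the atom with f(z)=1, i.e. containing the empty word,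
  and z --a--> z' iff z' is the unique atom with gamma_a(z') >= z.\<close>
definition atoms :: "'a list set set \<Rightarrow> 'a list set set" where
  "atoms B = {z \<in> B. z \<noteq> {} \<and> (\<forall>y\<in>B. y \<subseteq> z \<longrightarrow> y = {} \<or> y = z)}"

definition dual_init :: "'a list set set \<Rightarrow> 'a list set" where
  "dual_init B = (THE z. z \<in> atoms B \<and> [] \<in> z)"

definition dual_trans :: "'a list set set \<Rightarrow> 'a \<Rightarrow> 'a list set \<Rightarrow> 'a list set" where
  "dual_trans B a z = (THE z'. z' \<in> atoms B \<and> z \<subseteq> lderiv a z')"

definition falg_iso :: "'s set \<Rightarrow> ('a \<Rightarrow> 's \<Rightarrow> 's) \<Rightarrow> 's \<Rightarrow>
    't set \<Rightarrow> ('a \<Rightarrow> 't \<Rightarrow> 't) \<Rightarrow> 't \<Rightarrow> bool" where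
  "falg_iso Q d i Q' d' i' \<longleftrightarrow> (\<exists>h. bij_betw h Q Q' \<and> h i = i' \<and>
     (\<forall>a. \<forall>q\<in>Q. h (d a q) = d' a (h q)))"

definition min_states :: "'a list set \<Rightarrow> 'a list set set" where
  "min_states L = range (\<lambda>u. {w. u @ w \<in> L})"

definition min_init :: "'a list set \<Rightarrow> 'a list set" where
  "min_init L = L"

definition min_trans :: "'a \<Rightarrow> 'a list set \<Rightarrow> 'a list set" where
  "min_trans a K = lderiv a K"

definition syn_equiv :: "'a list set \<Rightarrow> 'a list \<Rightarrow> 'a list \<Rightarrow> bool" where
  "syn_equiv L u v \<longleftrightarrow> (\<forall>x y. x @ u @ y \<in> L \<longleftrightarrow> x @ v @ y \<in> L)"

definition syn_e :: "'a list set \<Rightarrow> 'a list \<Rightarrow> 'a list set" where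
  "syn_e L u = {v. syn_equiv L u v}"

definition Syn :: "'a list set \<Rightarrow> 'a list set set" where
  "Syn L = range (syn_e L)"

definition syn_mult :: "'a list set \<Rightarrow> 'a list set \<Rightarrow> 'a list set \<Rightarrow> 'a list set" where
  "syn_mult L m n = syn_e L ((SOME u. m = syn_e L u) @ (SOME v. n = syn_e L v))"

definition syn_unit :: "'a list set \<Rightarrow> 'a list set" where
  "syn_unit L = syn_e L []"

definition syn_trans :: "'a list set \<Rightarrow> 'a \<Rightarrow> 'a list set \<Rightarrow> 'a list set" where
  "syn_trans L a m = syn_mult L m (syn_e L [a])"

end

theory Submission
  imports Defs "HOL-Library.FuncSet"
begin

definition eqv :: "'a list set set \<Rightarrow> 'a list \<Rightarrow> 'a list \<Rightarrow> bool" where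
  "eqv R w w' \<longleftrightarrow> (\<forall>K\<in>R. w \<in> K \<longleftrightarrow> w' \<in> K)"

definition cls :: "'a list set set \<Rightarrow> 'a list \<Rightarrow> 'a list set" where
  "cls R w = {w'. eqv R w w'}"

definition B0 :: "'a list set set \<Rightarrow> 'a list set set" where
  "B0 R = {S. \<forall>w w'. eqv R w w' \<longrightarrow> (w \<in> S \<longleftrightarrow> w' \<in> S)}"

lemma cls_eq: "eqv R x y \<Longrightarrow> cls R x = cls R y"
  unfolding cls_def eqv_def by auto

lemma cls_eq_iff: "cls R x = cls R y \<longleftrightarrow> eqv R x y"
  unfolding cls_def eqv_def by (auto simp: set_eq_iff)

lemma cls_in_B0: "cls R w \<in> B0 R"
  unfolding cls_def B0_def eqv_def by auto

lemma self_cls: "w \<in> cls R w"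
  unfolding cls_def eqv_def by auto

lemma R_sub_B0: "R \<subseteq> B0 R"
  unfolding B0_def eqv_def by auto

lemma B0_mono: "R \<subseteq> R' \<Longrightarrow> B0 R \<subseteq> B0 R'"
  unfolding B0_def eqv_def by blast

lemma eqv_sym: "eqv R x y \<Longrightarrow> eqv R y x"
  unfolding eqv_def by blast

lemma eqv_trans: "eqv R x y \<Longrightarrow> eqv R y z \<Longrightarrow> eqv R x z"
  unfolding eqv_def by blast

lemma B0_D: "S \<in> B0 R \<Longrightarrow> eqv R w w' \<Longrightarrow> w \<in> S \<Longrightarrow> w' \<in> S"
  unfolding B0_def by blast

lemma cls_mem: "x \<in> cls R w \<longleftrightarrow> eqv R w x"
  unfolding cls_def by simp

lemma atoms_B0: "atoms (B0 R) = range (cls R)"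
proof
  show "range (cls R) \<subseteq> atoms (B0 R)"
  proof
    fix z assume "z \<in> range (cls R)"
    then obtain w where z: "z = cls R w" by auto
    have "\<forall>y\<in>B0 R. y \<subseteq> z \<longrightarrow> y = {} \<or> y = z"
    proof (intro ballI impI)
      fix y assume y: "y \<in> B0 R" "y \<subseteq> z"
      show "y = {} \<or> y = z"
      proof (cases "y = {}")
        case False
        then obtain w' where w': "w' \<in> y" by blast
        then have "w' \<in> cls R w" using y z by blast
        then have e: "eqv R w w'" by (simp add: cls_mem)
        have "z \<subseteq> y"
        proof
          fix x assume "x \<in> z"
          then have "eqv R w x" using z by (simp add: cls_mem)
          then have "eqv R w' x" using e eqv_sym eqv_trans by blast
          then show "x \<in> y" using B0_D[OF y(1) _ w'] by blast
        qed
        then show ?thesis using y by blast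
      qed simp
    qed
    moreover have "z \<in> B0 R" using z cls_in_B0 by simp
    moreover have "z \<noteq> {}" using z self_cls by blast
    ultimately show "z \<in> atoms (B0 R)" unfolding atoms_def by simp
  qed
next
  show "atoms (B0 R) \<subseteq> range (cls R)"
  proof
    fix z assume z: "z \<in> atoms (B0 R)"
    then have zB: "z \<in> B0 R" and zne: "z \<noteq> {}"
      and mn: "\<forall>y\<in>B0 R. y \<subseteq> z \<longrightarrow> y = {} \<or> y = z" unfolding atoms_def by simp_all
    then obtain w where w: "w \<in> z" by blast
    have "cls R w \<subseteq> z"
    proof
      fix x assume "x \<in> cls R w"
      then have "eqv R w x" by (simp add: cls_mem)
      then show "x \<in> z" using B0_D[OF zB _ w] by blast
    qed
    moreover have "cls R w \<noteq> {}" using self_cls by blast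
    ultimately have "cls R w = z" using mn cls_in_B0[of R w] by blast
    then show "z \<in> range (cls R)" by (metis rangeI)
  qed
qed

lemma dual_init_B0: "dual_init (B0 R) = cls R []"
  unfolding dual_init_def
proof (rule the_equality)
  show "cls R [] \<in> atoms (B0 R) \<and> [] \<in> cls R []" using atoms_B0 self_cls by auto
next
  fix z assume "z \<in> atoms (B0 R) \<and> [] \<in> z"
  then have "z \<in> range (cls R)" "[] \<in> z" using atoms_B0 by auto
  then obtain y where "z = cls R y" "[] \<in> cls R y" by auto
  then show "z = cls R []" using cls_eq unfolding cls_def eqv_def by auto
qed

lemma dual_trans_B0:
  assumes lc: "\<And>a w w'. eqv R w w' \<Longrightarrow> eqv R (a#w) (a#w')"
  shows "dual_trans (B0 R) a (cls R w) = cls R (a#w)"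
  unfolding dual_trans_def
proof (rule the_equality)
  show "cls R (a # w) \<in> atoms (B0 R) \<and> cls R w \<subseteq> lderiv a (cls R (a # w))"
    using atoms_B0 lc unfolding lderiv_def cls_def by auto
next
  fix z assume "z \<in> atoms (B0 R) \<and> cls R w \<subseteq> lderiv a z"
  then have "z \<in> range (cls R)" "a#w \<in> z" using atoms_B0 self_cls[of w R]
    unfolding lderiv_def by auto
  then obtain y where "z = cls R y" "a#w \<in> cls R y" by auto
  then show "z = cls R (a#w)" using cls_eq unfolding cls_def eqv_def by auto
qed

lemma iso_B0:
  assumes Q: "Q = range \<phi>" and i: "\<phi> [] = q0"
    and d: "\<And>a u. \<delta> a (\<phi> u) = \<phi> (u @ [a])"
    and e: "\<And>u u'. \<phi> u = \<phi> u' \<longleftrightarrow> eqv R (rev u) (rev u')"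
    and lc: "\<And>a w w'. eqv R w w' \<Longrightarrow> eqv R (a#w) (a#w')"
  shows "falg_iso Q \<delta> q0 (atoms (B0 R)) (dual_trans (B0 R)) (dual_init (B0 R))"
proof -
  define h where "h q = cls R (rev (SOME u. q = \<phi> u))" for q
  have hphi: "h (\<phi> u) = cls R (rev u)" for u
  proof -
    have "\<phi> u = \<phi> (SOME u'. \<phi> u = \<phi> u')" by (rule someI) auto
    then have "eqv R (rev u) (rev (SOME u'. \<phi> u = \<phi> u'))" using e by blast
    then show ?thesis unfolding h_def using cls_eq by metis
  qed
  have "inj_on h Q"
  proof
    fix x y assume "x \<in> Q" "y \<in> Q" "h x = h y"
    then obtain u v where "x = \<phi> u" "y = \<phi> v" "h x = h y" using Q by auto
    then show "x = y" using hphi e cls_eq_iff by metis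
  qed
  moreover have "h ` Q = atoms (B0 R)"
  proof -
    have "h ` Q = (\<lambda>u. cls R (rev u)) ` UNIV" using Q hphi by (auto simp: image_iff)
    also have "\<dots> = range (cls R)" by (metis (no_types) image_image surj_def rev_rev_ident)
    finally show ?thesis using atoms_B0[of R] by simp
  qed
  moreover have "h q0 = dual_init (B0 R)" using hphi[of "[]"] i dual_init_B0[of R] by simp
  moreover have "\<forall>a. \<forall>q\<in>Q. h (\<delta> a q) = dual_trans (B0 R) a (h q)"
    using Q d hphi dual_trans_B0[OF lc] by auto
  ultimately show ?thesis unfolding falg_iso_def bij_betw_def by blast
qed

lemma bs_Inter: "finite F \<Longrightarrow> bool_subalg B \<Longrightarrow> F \<subseteq> B \<Longrightarrow> \<Inter>F \<in> B"
  by (induction F rule: finite_induct) (auto simp: bool_subalg_def)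

lemma bs_Union: "finite F \<Longrightarrow> bool_subalg B \<Longrightarrow> F \<subseteq> B \<Longrightarrow> \<Union>F \<in> B"
  by (induction F rule: finite_induct) (auto simp: bool_subalg_def)

lemma B0_min:
  assumes "finite R" "bool_subalg B" "R \<subseteq> B"
  shows "B0 R \<subseteq> B"
proof
  fix S assume S: "S \<in> B0 R"
  define g where "g X = \<Inter>((\<lambda>K. if K \<in> X then K else - K) ` R)" for X
  have clsg: "cls R w = g {K\<in>R. w \<in> K}" for w
    unfolding g_def cls_def eqv_def by auto
  have gB: "g X \<in> B" for X
    unfolding g_def using assms
    by (intro bs_Inter[OF _ assms(2)]) (auto simp: bool_subalg_def)
  have fin: "finite (range (cls R))"
  proof (rule finite_subset)
    show "range (cls R) \<subseteq> g ` Pow R" using clsg by auto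
    show "finite (g ` Pow R)" using assms by auto
  qed
  have "S = \<Union>(cls R ` S)"
    using S self_cls unfolding B0_def cls_def by blast
  moreover have "finite (cls R ` S)" using fin by (rule finite_subset[rotated]) auto
  then have "\<Union>(cls R ` S) \<in> B"
    using clsg gB assms(2) by (intro bs_Union[OF _ assms(2)]) auto
  ultimately show "S \<in> B" by simp
qed

lemma lderivs_in: "subcoalg B \<Longrightarrow> K \<in> B \<Longrightarrow> {w. u @ w \<in> K} \<in> B"
proof (induction u arbitrary: K)
  case Nil then show ?case by simp
next
  case (Cons a u)
  have "lderiv a K \<in> B" using Cons.prems unfolding subcoalg_def by auto
  from Cons.IH[OF Cons.prems(1) this] show ?case by (simp add: lderiv_def)
qed

lemma rderivs_in: "local_variety B \<Longrightarrow> K \<in> B \<Longrightarrow> {w. w @ v \<in> K} \<in> B"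
proof (induction v)
  case Nil then show ?case by simp
next
  case (Cons a v)
  have "rderiv a {w. w @ v \<in> K} \<in> B" using Cons unfolding local_variety_def by auto
  then show ?case by (simp add: rderiv_def)
qed

lemma regular_from_finite:
  fixes D :: "'a \<Rightarrow> 's \<Rightarrow> 's"
  assumes fQ: "finite Q" and s0: "s0 \<in> Q" and cl: "\<forall>a q. q \<in> Q \<longrightarrow> D a q \<in> Q"
  shows "regular {w. fold D w s0 \<in> F}"
proof -
  obtain f :: "'s \<Rightarrow> nat" where bij: "bij_betw f Q {0..<card Q}"
    using ex_bij_betw_finite_nat[OF fQ] by blast
  then have inj: "inj_on f Q" by (simp add: bij_betw_def)
  define g where "g = inv_into Q f"
  define d' where "d' a n = (if n \<in> f ` Q then f (D a (g n)) else 0)" for a n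
  have stay: "q \<in> Q \<Longrightarrow> fold D w q \<in> Q" for w q
    using cl by (induction w arbitrary: q) auto
  have key: "q \<in> Q \<Longrightarrow> fold d' w (f q) = f (fold D w q)" for w q
  proof (induction w arbitrary: q)
    case Nil then show ?case by simp
  next
    case (Cons a w)
    have "d' a (f q) = f (D a q)" using Cons.prems inj unfolding d'_def g_def by auto
    then show ?case using Cons cl by simp
  qed
  have L: "{w. fold D w s0 \<in> F} = {w. fold d' w (f s0) \<in> f ` (F \<inter> Q)}"
  proof -
    have "fold D w s0 \<in> F \<longleftrightarrow> f (fold D w s0) \<in> f ` (F \<inter> Q)" for w
      using stay[OF s0, of w] inj by (auto simp: inj_on_def)
    then show ?thesis using key[OF s0] by auto
  qed
  show ?thesis unfolding regular_def
    apply (rule exI[of _ "f ` Q"], rule exI[of _ d'], rule exI[of _ "f s0"], rule exI[of _ "f ` (F \<inter> Q)"])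
    using fQ s0 cl L unfolding d'_def g_def
    by (auto simp: inv_into_into)
qed


definition Ra :: "'a list set \<Rightarrow> 'a list set set" where
  "Ra L = range (\<lambda>u. {w. u @ w \<in> lang_rev L})"
definition Rb :: "'a list set \<Rightarrow> 'a list set set" where
  "Rb L = range (\<lambda>(u,v). {w. u @ w @ v \<in> lang_rev L})"

lemma mem_rev: "xs \<in> lang_rev L \<longleftrightarrow> rev xs \<in> L"
  unfolding lang_rev_def by (metis image_iff rev_rev_ident)

lemma Ra_Rb: "Ra L \<subseteq> Rb L"
proof
  fix K assume "K \<in> Ra L"
  then obtain u where "K = {w. u @ w \<in> lang_rev L}" unfolding Ra_def by auto
  then have "K = (\<lambda>(u,v). {w. u @ w @ v \<in> lang_rev L}) (u,[])" by simp
  then show "K \<in> Rb L" unfolding Rb_def by (rule image_eqI) simp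
qed

lemma lderiv_B0: "(\<And>w w'. eqv R w w' \<Longrightarrow> eqv R (a#w) (a#w')) \<Longrightarrow> K \<in> B0 R \<Longrightarrow> lderiv a K \<in> B0 R"
  unfolding B0_def lderiv_def by blast

lemma rderiv_B0: "(\<And>w w'. eqv R w w' \<Longrightarrow> eqv R (w@[a]) (w'@[a])) \<Longrightarrow> K \<in> B0 R \<Longrightarrow> rderiv a K \<in> B0 R"
  unfolding B0_def rderiv_def by blast

lemma eqv_Ra: "eqv (Ra L) w w' \<longleftrightarrow> (\<forall>u. u @ w \<in> lang_rev L \<longleftrightarrow> u @ w' \<in> lang_rev L)"
  unfolding eqv_def Ra_def by auto

lemma eqv_Rb: "eqv (Rb L) w w' \<longleftrightarrow> (\<forall>u v. u @ w @ v \<in> lang_rev L \<longleftrightarrow> u @ w' @ v \<in> lang_rev L)"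
  unfolding eqv_def Rb_def by auto

lemma lc_Ra: "eqv (Ra L) w w' \<Longrightarrow> eqv (Ra L) (a#w) (a#w')"
  unfolding eqv_Ra by (metis append_Cons append_Nil append_assoc)

lemma lc_Rb: "eqv (Rb L) w w' \<Longrightarrow> eqv (Rb L) (a#w) (a#w')"
  unfolding eqv_Rb by (metis append_Cons append_Nil append_assoc)

lemma rc_Rb: "eqv (Rb L) w w' \<Longrightarrow> eqv (Rb L) (w@[a]) (w'@[a])"
  unfolding eqv_Rb by (metis append_Cons append_Nil append_assoc)

lemma fold_stay: "(\<forall>a q. q \<in> Q \<longrightarrow> d a q \<in> Q) \<Longrightarrow> q \<in> Q \<Longrightarrow> fold d w q \<in> Q"
  by (induction w arbitrary: q) auto

lemma finite_Rb:
  fixes L :: "'a list set"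
  assumes "regular L" shows "finite (Rb L)"
proof -
  obtain Q :: "nat set" and d q0 Fin where A: "finite Q" "q0 \<in> Q" "Fin \<subseteq> Q"
    "\<forall>a q. q \<in> Q \<longrightarrow> d a q \<in> Q" "L = {w. fold d w q0 \<in> Fin}"
    using assms unfolding regular_def by blast
  define g where "g = (\<lambda>(p,G). {w :: 'a list. fold d (rev w) p \<in> G})"
  have "Rb L \<subseteq> g ` (Q \<times> Pow Q)"
  proof
    fix K assume "K \<in> Rb L"
    then obtain u v where K: "K = {w. u @ w @ v \<in> lang_rev L}" unfolding Rb_def by auto
    define p where "p = fold d (rev v) q0"
    define G where "G = {q\<in>Q. fold d (rev u) q \<in> Fin}"
    have p: "p \<in> Q" unfolding p_def using A fold_stay by metis
    have "K = g (p, G)"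
      unfolding K g_def G_def p_def mem_rev using A(2,4,5) fold_stay[OF A(4)]
      by auto
    then show "K \<in> g ` (Q \<times> Pow Q)" using p unfolding G_def by auto
  qed
  then show ?thesis using A(1) by (auto intro: finite_subset)
qed

lemma B0_Rb_Reg:
  fixes L :: "'a list set"
  assumes "regular L" shows "B0 (Rb L) \<subseteq> Reg"
proof
  fix S assume S: "S \<in> B0 (Rb L)"
  obtain Q :: "nat set" and d q0 Fin where A: "finite Q" "q0 \<in> Q" "Fin \<subseteq> Q"
    "\<forall>a q. q \<in> Q \<longrightarrow> d a q \<in> Q" "L = {w. fold d w q0 \<in> Fin}"
    using assms unfolding regular_def by blast
  define fw where "fw w = (\<lambda>q. if q \<in> Q then fold d (rev w) q else undefined)" for w :: "'a list"
  define D where "D a f = (\<lambda>q. if q \<in> Q then f (d a q) else undefined)" for a and f :: "nat \<Rightarrow> nat"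
  have feq: "eqv (Rb L) w w'" if "fw w = fw w'" for w w'
    unfolding eqv_Rb
  proof (intro allI)
    fix u v
    have p: "fold d (rev v) q0 \<in> Q" using fold_stay[OF A(4) A(2)] by blast
    have "fold d (rev w) (fold d (rev v) q0) = fold d (rev w') (fold d (rev v) q0)"
      using fun_cong[OF that, of "fold d (rev v) q0"] p unfolding fw_def by simp
    then show "u @ w @ v \<in> lang_rev L \<longleftrightarrow> u @ w' @ v \<in> lang_rev L"
      unfolding mem_rev A(5) by simp
  qed
  have fold_D: "fold D w (fw []) = fw w" for w
  proof (induction w rule: rev_induct)
    case Nil then show ?case by simp
  next
    case (snoc a w)
    have "fold D (w @ [a]) (fw []) = D a (fw w)" using snoc by simp
    also have "\<dots> = fw (w @ [a])" using A(4) by (auto simp: D_def fw_def fun_eq_iff)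
    finally show ?case .
  qed
  have "S = {w. fold D w (fw []) \<in> fw ` S}"
  proof -
    have mem: "w \<in> S \<longleftrightarrow> fw w \<in> fw ` S" for w
    proof
      assume "fw w \<in> fw ` S"
      then obtain w'' where w'': "w'' \<in> S" "fw w'' = fw w" by (auto simp: image_iff)
      have "eqv (Rb L) w'' w" using feq w''(2) by blast
      then show "w \<in> S" using B0_D[OF S _ w''(1)] by blast
    qed (rule imageI)
    show ?thesis
    proof (rule set_eqI)
      fix w show "w \<in> S \<longleftrightarrow> w \<in> {w. fold D w (fw []) \<in> fw ` S}"
        using mem[of w] fold_D[of w] by simp
    qed
  qed
  moreover have "regular {w. fold D w (fw []) \<in> fw ` S}"
  proof (rule regular_from_finite)
    show "finite (Q \<rightarrow>\<^sub>E Q)" using A(1) by (intro finite_PiE) auto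
    show "fw [] \<in> Q \<rightarrow>\<^sub>E Q" unfolding fw_def by auto
    show "\<forall>a q. q \<in> Q \<rightarrow>\<^sub>E Q \<longrightarrow> D a q \<in> Q \<rightarrow>\<^sub>E Q"
    proof (intro allI impI)
      fix a q assume q: "q \<in> Q \<rightarrow>\<^sub>E Q"
      show "D a q \<in> Q \<rightarrow>\<^sub>E Q" unfolding PiE_iff
      proof
        show "\<forall>x\<in>Q. D a q x \<in> Q" using q A(4) unfolding D_def PiE_iff by simp
        show "D a q \<in> extensional Q" unfolding D_def extensional_def by simp
      qed
    qed
  qed
  ultimately show "S \<in> Reg" unfolding Reg_def by simp
qed

lemma B0_Ra_Reg: "regular L \<Longrightarrow> B0 (Ra L) \<subseteq> Reg"
  using B0_Rb_Reg B0_mono[OF Ra_Rb] by blast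

lemma bool_B0: "B0 R \<subseteq> Reg \<Longrightarrow> bool_subalg (B0 R)"
  unfolding bool_subalg_def B0_def by auto

lemma gen_a:
  assumes "regular L" shows "subcoalg_gen (lang_rev L) = B0 (Ra L)"
proof -
  have sc: "subcoalg (B0 (Ra L))"
    unfolding subcoalg_def
  proof (intro conjI allI ballI)
    show "bool_subalg (B0 (Ra L))" by (rule bool_B0[OF B0_Ra_Reg[OF assms]])
    show "lderiv a K \<in> B0 (Ra L)" if "K \<in> B0 (Ra L)" for a K
      by (rule lderiv_B0[OF lc_Ra that])
  qed
  have "lang_rev L \<in> Ra L" unfolding Ra_def by (rule image_eqI[of _ _ "[]"]) simp_all
  then have inn: "lang_rev L \<in> B0 (Ra L)" using R_sub_B0 by blast
  have fin: "finite (Ra L)" by (rule finite_subset[OF Ra_Rb finite_Rb[OF assms]])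
  have mn: "B0 (Ra L) \<subseteq> B" if "subcoalg B" "lang_rev L \<in> B" for B
  proof (rule B0_min[OF fin])
    show "bool_subalg B" using that unfolding subcoalg_def by blast
    show "Ra L \<subseteq> B"
    proof
      fix K assume "K \<in> Ra L"
      then obtain u where K: "K = {w. u @ w \<in> lang_rev L}" unfolding Ra_def by blast
      show "K \<in> B" unfolding K by (rule lderivs_in[OF that])
    qed
  qed
  show ?thesis unfolding subcoalg_gen_def
  proof (rule antisym)
    show "\<Inter>{B. subcoalg B \<and> lang_rev L \<in> B} \<subseteq> B0 (Ra L)"
      by (rule Inter_lower) (simp add: sc inn)
    show "B0 (Ra L) \<subseteq> \<Inter>{B. subcoalg B \<and> lang_rev L \<in> B}"
      by (rule Inter_greatest) (simp add: mn)
  qed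
qed

lemma gen_b:
  assumes "regular L" shows "local_variety_gen (lang_rev L) = B0 (Rb L)"
proof -
  have sc: "local_variety (B0 (Rb L))"
    unfolding local_variety_def subcoalg_def
  proof (intro conjI allI ballI)
    show "bool_subalg (B0 (Rb L))" by (rule bool_B0[OF B0_Rb_Reg[OF assms]])
    show "lderiv a K \<in> B0 (Rb L)" if "K \<in> B0 (Rb L)" for a K
      by (rule lderiv_B0[OF lc_Rb that])
    show "rderiv a K \<in> B0 (Rb L)" if "K \<in> B0 (Rb L)" for a K
      by (rule rderiv_B0[OF rc_Rb that])
  qed
  have "lang_rev L \<in> Rb L" unfolding Rb_def by (rule image_eqI[of _ _ "([],[])"]) simp_all
  then have inn: "lang_rev L \<in> B0 (Rb L)" using R_sub_B0 by blast
  have fin: "finite (Rb L)" using finite_Rb[OF assms] .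
  have mn: "B0 (Rb L) \<subseteq> B" if "local_variety B" "lang_rev L \<in> B" for B
  proof (rule B0_min[OF fin])
    show "bool_subalg B" using that unfolding local_variety_def subcoalg_def by blast
    show "Rb L \<subseteq> B"
    proof
      fix K assume "K \<in> Rb L"
      then obtain u v where K: "K = {w. u @ w @ v \<in> lang_rev L}" unfolding Rb_def by auto
      have "{w. w @ v \<in> lang_rev L} \<in> B" using rderivs_in that by blast
      then have "{w. u @ w \<in> {x. x @ v \<in> lang_rev L}} \<in> B"
        using lderivs_in that unfolding local_variety_def by blast
      then show "K \<in> B" unfolding K by simp
    qed
  qed
  show ?thesis unfolding local_variety_gen_def
  proof (rule antisym)
    show "\<Inter>{B. local_variety B \<and> lang_rev L \<in> B} \<subseteq> B0 (Rb L)"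
      by (rule Inter_lower) (simp add: sc inn)
    show "B0 (Rb L) \<subseteq> \<Inter>{B. local_variety B \<and> lang_rev L \<in> B}"
      by (rule Inter_greatest) (simp add: mn)
  qed
qed


lemma syn_refl: "syn_equiv L u u" unfolding syn_equiv_def by auto

lemma syn_e_eq: "syn_e L u = syn_e L u' \<longleftrightarrow> syn_equiv L u u'"
proof
  assume h: "syn_e L u = syn_e L u'"
  have "u' \<in> syn_e L u'" unfolding syn_e_def by (simp add: syn_refl)
  then have "u' \<in> syn_e L u" using h by simp
  then show "syn_equiv L u u'" unfolding syn_e_def by simp
next
  assume h: "syn_equiv L u u'"
  show "syn_e L u = syn_e L u'"
    unfolding syn_e_def using h unfolding syn_equiv_def by blast
qed

lemma syn_cong: "syn_equiv L u1 u2 \<Longrightarrow> syn_equiv L v1 v2 \<Longrightarrow> syn_equiv L (u1 @ v1) (u2 @ v2)"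
proof -
  assume h1: "syn_equiv L u1 u2" and h2: "syn_equiv L v1 v2"
  show ?thesis unfolding syn_equiv_def
  proof (intro allI)
    fix x y
    have "x @ (u1 @ v1) @ y \<in> L \<longleftrightarrow> (x @ u1) @ v1 @ y \<in> L" by simp
    also have "\<dots> \<longleftrightarrow> (x @ u1) @ v2 @ y \<in> L" using h2 unfolding syn_equiv_def by blast
    also have "\<dots> \<longleftrightarrow> x @ u1 @ (v2 @ y) \<in> L" by simp
    also have "\<dots> \<longleftrightarrow> x @ u2 @ (v2 @ y) \<in> L" using h1 unfolding syn_equiv_def by blast
    also have "\<dots> \<longleftrightarrow> x @ (u2 @ v2) @ y \<in> L" by simp
    finally show "x @ (u1 @ v1) @ y \<in> L \<longleftrightarrow> x @ (u2 @ v2) @ y \<in> L" .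
  qed
qed

lemma syn_sym: "syn_equiv L u v \<Longrightarrow> syn_equiv L v u"
  unfolding syn_equiv_def by blast

lemma syn_trans_e: "syn_trans L a (syn_e L u) = syn_e L (u @ [a])"
proof -
  define u1 where "u1 = (SOME u'. syn_e L u = syn_e L u')"
  define v1 where "v1 = (SOME v. syn_e L [a] = syn_e L v)"
  have 1: "syn_e L u = syn_e L u1" unfolding u1_def by (rule someI) (rule refl)
  have 2: "syn_e L [a] = syn_e L v1" unfolding v1_def by (rule someI) (rule refl)
  have "syn_equiv L u u1" "syn_equiv L [a] v1" using 1 2 syn_e_eq by blast+
  then have "syn_equiv L (u @ [a]) (u1 @ v1)" by (rule syn_cong)
  then have "syn_e L (u1 @ v1) = syn_e L (u @ [a])" using syn_e_eq syn_sym by blast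
  moreover have "syn_trans L a (syn_e L u) = syn_e L (u1 @ v1)"
    unfolding syn_trans_def syn_mult_def u1_def v1_def ..
  ultimately show ?thesis by simp
qed

lemma part_a: "regular L \<Longrightarrow> falg_iso (min_states L) min_trans (min_init L)
           (atoms (subcoalg_gen (lang_rev L))) (dual_trans (subcoalg_gen (lang_rev L)))
           (dual_init (subcoalg_gen (lang_rev L)))"
  unfolding gen_a
proof (rule iso_B0[where \<phi>="\<lambda>u. {w. u @ w \<in> L}"])
  show "min_states L = range (\<lambda>u. {w. u @ w \<in> L})" unfolding min_states_def ..
  show "{w. [] @ w \<in> L} = min_init L" unfolding min_init_def by simp
  show "min_trans a {w. u @ w \<in> L} = {w. (u @ [a]) @ w \<in> L}" for a u
    unfolding min_trans_def lderiv_def by simp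
  show "eqv (Ra L) w w' \<Longrightarrow> eqv (Ra L) (a # w) (a # w')" for a w w' by (rule lc_Ra)
  show "({w. u @ w \<in> L} = {w. u' @ w \<in> L}) = eqv (Ra L) (rev u) (rev u')" for u u'
  proof -
    have "(\<forall>x. (u @ rev x \<in> L) = (u' @ rev x \<in> L)) \<longleftrightarrow> (\<forall>w. (u @ w \<in> L) = (u' @ w \<in> L))"
    proof
      assume h: "\<forall>x. (u @ rev x \<in> L) = (u' @ rev x \<in> L)"
      show "\<forall>w. (u @ w \<in> L) = (u' @ w \<in> L)"
      proof
        fix w show "(u @ w \<in> L) = (u' @ w \<in> L)" using h[rule_format, of "rev w"] by simp
      qed
    qed simp
    then show ?thesis unfolding eqv_Ra mem_rev set_eq_iff by simp
  qed
qed

lemma part_b: "regular L \<Longrightarrow> falg_iso (Syn L) (syn_trans L) (syn_unit L)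
           (atoms (local_variety_gen (lang_rev L))) (dual_trans (local_variety_gen (lang_rev L)))
           (dual_init (local_variety_gen (lang_rev L)))"
  unfolding gen_b
proof (rule iso_B0[where \<phi>="syn_e L"])
  show "Syn L = range (syn_e L)" unfolding Syn_def ..
  show "syn_e L [] = syn_unit L" unfolding syn_unit_def ..
  show "syn_trans L a (syn_e L u) = syn_e L (u @ [a])" for a u by (rule syn_trans_e)
  show "eqv (Rb L) w w' \<Longrightarrow> eqv (Rb L) (a # w) (a # w')" for a w w' by (rule lc_Rb)
  show "(syn_e L u = syn_e L u') = eqv (Rb L) (rev u) (rev u')" for u u'
  proof -
    have "(\<forall>x y. (rev y @ u @ rev x \<in> L) = (rev y @ u' @ rev x \<in> L)) \<longleftrightarrow> (\<forall>x y. (x @ u @ y \<in> L) = (x @ u' @ y \<in> L))"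
    proof
      assume h: "\<forall>x y. (rev y @ u @ rev x \<in> L) = (rev y @ u' @ rev x \<in> L)"
      show "\<forall>x y. (x @ u @ y \<in> L) = (x @ u' @ y \<in> L)"
      proof (intro allI)
        fix x y show "(x @ u @ y \<in> L) = (x @ u' @ y \<in> L)" using h[rule_format, of "rev x" "rev y"] h[rule_format, of "rev y" "rev x"] by simp
      qed
    qed simp
    then show ?thesis unfolding eqv_Rb mem_rev syn_e_eq syn_equiv_def by simp
  qed
qed


theorem mainTheorem13:
  fixes L :: "'a::finite list set"
  assumes "regular L"
  shows "falg_iso (min_states L) min_trans (min_init L)
           (atoms (subcoalg_gen (lang_rev L))) (dual_trans (subcoalg_gen (lang_rev L)))
           (dual_init (subcoalg_gen (lang_rev L)))
       \<and> falg_iso (Syn L) (syn_trans L) (syn_unit L)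
           (atoms (local_variety_gen (lang_rev L))) (dual_trans (local_variety_gen (lang_rev L)))
           (dual_init (local_variety_gen (lang_rev L)))"
  using part_a[OF assms] part_b[OF assms] by (rule conjI)

end
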